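(* Let $n\ge 1$, $1<p<\infty$, and let $f\in L^p(\mathbb{R}^n)$ be radially symmetric. Then there is a constant $C$ (independent of $f$, $R$ and $x$) such that for every $R>0$ and every $x\neq 0$, $$ |(f*\chi_{B(0,R)})(x)| \le C\, R^{\,n-1/p}\, |x|^{-(n-1)/p}\, \| f \|_{L^p(\mathbb{R}^n)}, $$ where $\chi_{B(0,R)}$ is the indicator function of the ball $B(0,R)=\{y\in\mathbb{R}^n:|y|<R\}$.
   Context: A function $f$ on $\mathbb{R}^n$ is radially symmetric if $f(x)=f_0(|x|)$ for some function $f_0$ on $[0,\infty)$. *)

theory Defs
  imports "HOL-Analysis.Analysis"
begin

definition radially_symmetric :: "('a::real_normed_vector \<Rightarrow> 'b) \<Rightarrow> bool" where
  "radially_symmetric f \<longleftrightarrow> (\<exists>f0 :: real \<Rightarrow> 'b. \<forall>x. f x = f0 (norm x))"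

definition in_Lp :: "real \<Rightarrow> ('a::euclidean_space \<Rightarrow> real) \<Rightarrow> bool" where
  "in_Lp p f \<longleftrightarrow> f \<in> borel_measurable lebesgue \<and> integrable lebesgue (\<lambda>x. \<bar>f x\<bar> powr p)"

definition Lp_norm :: "real \<Rightarrow> ('a::euclidean_space \<Rightarrow> real) \<Rightarrow> real" where
  "Lp_norm p f = (LINT x|lebesgue. \<bar>f x\<bar> powr p) powr (1 / p)"

definition conv :: "('a::euclidean_space \<Rightarrow> real) \<Rightarrow> ('a \<Rightarrow> real) \<Rightarrow> 'a \<Rightarrow> real" where
  "conv f g x = (LINT y|lebesgue. f y * g (x - y))"

end

theory Submission
  imports Defs
begin


typedef (overloaded) ('a::euclidean_space) bidx = "Basis :: 'a set"
  using nonempty_Basis by blast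

instance bidx :: (euclidean_space) finite
proof
  show "finite (UNIV :: 'a bidx set)"
    by (metis type_definition.Abs_image type_definition_bidx finite_Basis finite_imageI)
qed

definition bidx_nat :: "('a::euclidean_space) bidx \<Rightarrow> nat" where
  "bidx_nat = (SOME f. inj f)"

lemma inj_bidx_nat: "inj bidx_nat"
proof -
  have "\<exists>f::'a bidx \<Rightarrow> nat. inj f"
    using countable_finite[of "UNIV :: 'a bidx set"] by (auto simp: countable_def)
  then show ?thesis unfolding bidx_nat_def by (rule someI_ex)
qed

instantiation bidx :: (euclidean_space) linorder
begin
definition less_eq_bidx :: "'a bidx \<Rightarrow> 'a bidx \<Rightarrow> bool" where
  "less_eq_bidx x y \<longleftrightarrow> bidx_nat x \<le> bidx_nat y"
definition less_bidx :: "'a bidx \<Rightarrow> 'a bidx \<Rightarrow> bool" where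
  "less_bidx x y \<longleftrightarrow> bidx_nat x < bidx_nat y"
instance
  by standard (use inj_bidx_nat in \<open>auto simp: less_eq_bidx_def less_bidx_def inj_eq dest: injD\<close>)
end

instance bidx :: (euclidean_space) wellorder
proof
  fix P :: "'a bidx \<Rightarrow> bool" and a :: "'a bidx"
  assume H: "\<And>x. (\<And>y. y < x \<Longrightarrow> P y) \<Longrightarrow> P x"
  show "P a"
    by (induct a rule: measure_induct_rule[of bidx_nat]) (rule H, auto simp: less_bidx_def)
qed

definition Phi :: "'a::euclidean_space \<Rightarrow> real^('a bidx)" where
  "Phi x = (\<chi> i. x \<bullet> Rep_bidx i)"

definition Psi :: "real^('a bidx) \<Rightarrow> 'a::euclidean_space" where
  "Psi v = (\<Sum>i\<in>UNIV. (v $ i) *\<^sub>R Rep_bidx i)"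

lemma sum_bidx: "(\<Sum>i\<in>UNIV. h (Rep_bidx i)) = (\<Sum>b\<in>(Basis::'a::euclidean_space set). h b)"
proof -
  have "bij_betw Rep_bidx (UNIV :: 'a bidx set) Basis"
    by (metis bij_betw_def type_definition.Rep_range type_definition_bidx inj_def Rep_bidx_inject)
  then show ?thesis by (rule sum.reindex_bij_betw)
qed

lemma prod_bidx: "(\<Prod>i\<in>UNIV. h (Rep_bidx i)) = (\<Prod>b\<in>(Basis::'a::euclidean_space set). h b)"
proof -
  have "bij_betw Rep_bidx (UNIV :: 'a bidx set) Basis"
    by (metis bij_betw_def type_definition.Rep_range type_definition_bidx inj_def Rep_bidx_inject)
  then show ?thesis by (rule prod.reindex_bij_betw)
qed

lemma Psi_Phi[simp]: "Psi (Phi x) = x"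
  unfolding Psi_def Phi_def using sum_bidx[of "\<lambda>b. (x \<bullet> b) *\<^sub>R b"]
  by (simp add: euclidean_representation)

lemma Psi_inner: "Psi v \<bullet> Rep_bidx j = v $ j"
proof -
  have "Psi v \<bullet> Rep_bidx j = (\<Sum>i\<in>UNIV. v $ i * (Rep_bidx i \<bullet> Rep_bidx j))"
    unfolding Psi_def by (simp add: inner_sum_left)
  also have "\<dots> = (\<Sum>i\<in>UNIV. if i = j then v $ j else 0)"
    by (intro sum.cong refl) (auto simp: inner_Basis Rep_bidx Rep_bidx_inject)
  finally show ?thesis by simp
qed

lemma Phi_Psi[simp]: "Phi (Psi v) = v"
  by (simp add: Phi_def Psi_inner vec_eq_iff)

lemma linear_Phi: "linear Phi"
  by (rule linearI) (simp_all add: Phi_def vec_eq_iff inner_add_left)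

lemma linear_Psi: "linear Psi"
  by (rule linearI) (simp_all add: Psi_def sum.distrib scaleR_add_left scaleR_sum_right)

lemma inner_Phi: "Phi x \<bullet> Phi y = x \<bullet> y"
proof -
  have "Phi x \<bullet> Phi y = (\<Sum>i\<in>UNIV. (x \<bullet> Rep_bidx i) * (y \<bullet> Rep_bidx i))"
    by (simp add: inner_vec_def Phi_def)
  also have "\<dots> = (\<Sum>b\<in>Basis. (x \<bullet> b) * (y \<bullet> b))"
    by (rule sum_bidx)
  also have "\<dots> = x \<bullet> y"
    by (rule euclidean_inner[symmetric])
  finally show ?thesis .
qed

lemma norm_Phi: "norm (Phi x) = norm x"
  by (simp add: norm_eq_sqrt_inner inner_Phi)

lemma Phi_borel[measurable]: "Phi \<in> borel_measurable borel"
  by (intro borel_measurable_continuous_onI linear_continuous_on linear_conv_bounded_linear[THEN iffD1] linear_Phi)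

lemma Psi_borel[measurable]: "Psi \<in> borel_measurable borel"
  by (intro borel_measurable_continuous_onI linear_continuous_on linear_conv_bounded_linear[THEN iffD1] linear_Psi)

lemma distr_Phi: "distr lborel borel Phi = (lborel :: (real^('a::euclidean_space bidx)) measure)"
proof (rule lborel_eqI[symmetric])
  fix l u :: "real^('a bidx)"
  assume le: "\<And>b. b \<in> Basis \<Longrightarrow> l \<bullet> b \<le> u \<bullet> b"
  have le': "l $ i \<le> u $ i" for i
  proof -
    have "axis i 1 \<in> (Basis :: (real^'a bidx) set)" by (auto simp: Basis_vec_def)
    from le[OF this] show ?thesis by (simp add: cart_eq_inner_axis)
  qed
  have pre: "Phi -` box l u = box (Psi l) (Psi u :: 'a)"
  proof -
    have "x \<in> box l u \<longleftrightarrow> (\<forall>i. l $ i < x $ i \<and> x $ i < u $ i)" for x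
      by (simp add: mem_box_cart)
    moreover have "y \<in> box (Psi l) (Psi u :: 'a) \<longleftrightarrow> (\<forall>i. l $ i < y \<bullet> Rep_bidx i \<and> y \<bullet> Rep_bidx i < u $ i)" for y
      unfolding mem_box by (metis Psi_inner Rep_bidx Rep_bidx_cases)
    ultimately show ?thesis by (auto simp: Phi_def)
  qed
  have "emeasure (distr lborel borel Phi) (box l u) = emeasure lborel (box (Psi l) (Psi u :: 'a))"
    by (simp add: emeasure_distr pre)
  also have "\<dots> = (\<Prod>b\<in>(Basis::'a set). (Psi u - Psi l) \<bullet> b)"
    by (rule emeasure_lborel_box) (metis Psi_inner Rep_bidx_cases le')
  also have "\<dots> = (\<Prod>i\<in>UNIV. u $ i - l $ i)"
    using prod_bidx[of "\<lambda>b. (Psi u - Psi l) \<bullet> b"] by (simp add: inner_diff_left Psi_inner)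
  also have "\<dots> = (\<Prod>b\<in>Basis. (u - l) \<bullet> b)"
  proof -
    have "cbox l u \<noteq> {}" using le by (simp add: box_ne_empty)
    then show ?thesis using content_cbox_cart[of l u] content_cbox_if[of l u]
      by (simp add: inner_diff_left)
  qed
  finally show "emeasure (distr lborel borel Phi) (box l u) = (\<Prod>b\<in>Basis. (u - l) \<bullet> b)"
    .
qed simp


lemma distr_orth:
  fixes Q :: "real^'n::{finite,wellorder} \<Rightarrow> real^'n::_"
  assumes Q: "orthogonal_transformation Q"
  shows "distr lborel borel Q = lborel"
proof (rule lborel_eqI[symmetric])
  have lin: "linear Q" using Q by (rule orthogonal_transformation_linear)
  have Qm: "Q \<in> borel_measurable borel"
    by (intro borel_measurable_continuous_onI linear_continuous_on linear_conv_bounded_linear[THEN iffD1] lin)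
  fix l u :: "real^'n::{finite,wellorder}"
  assume le: "\<And>b. b \<in> Basis \<Longrightarrow> l \<bullet> b \<le> u \<bullet> b"
  have pre: "Q -` box l u = inv Q ` box l u"
    using Q by (simp add: bij_vimage_eq_inv_image orthogonal_transformation_bij)
  have fm: "inv Q ` box l u \<in> lmeasurable" and me: "measure lebesgue (inv Q ` box l u) = measure lebesgue (box l u)"
    using measurable_orthogonal_image[OF orthogonal_transformation_inv[OF Q]] 
      measure_orthogonal_image[OF orthogonal_transformation_inv[OF Q]] by auto
  have bor: "Q -` box l u \<in> sets borel"
    using Qm by (simp add: measurable_sets_borel)
  have "emeasure (distr lborel borel Q) (box l u) = emeasure lborel (Q -` box l u)"
    using Qm by (simp add: emeasure_distr)
  also have "\<dots> = emeasure lebesgue (Q -` box l u)"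
    using bor by simp
  also have "\<dots> = measure lebesgue (box l u)"
    using fm me pre by (simp add: emeasure_eq_measure2)
  also have "\<dots> = emeasure lebesgue (box l u)"
    by (simp add: emeasure_eq_measure2)
  also have "\<dots> = emeasure lborel (box l u)"
    by simp
  also have "\<dots> = (\<Prod>b\<in>Basis. (u - l) \<bullet> b)"
    using le by simp
  finally show "emeasure (distr lborel borel Q) (box l u) = (\<Prod>b\<in>Basis. (u - l) \<bullet> b)" .
qed simp

lemma distr_Psi: "distr lborel borel Psi = (lborel :: ('a::euclidean_space) measure)"
proof -
  have "distr lborel borel Psi = distr (distr (lborel::'a measure) borel Phi) borel Psi"
    by (simp add: distr_Phi)
  also have "\<dots> = distr (lborel::'a measure) borel (Psi \<circ> Phi)"
    by (rule distr_distr) auto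
  also have "\<dots> = distr (lborel::'a measure) lborel (\<lambda>x. x)"
    by (rule distr_cong) auto
  finally show ?thesis by simp
qed

lemma distr_lebesgue_from_lborel:
  fixes T :: "'a::euclidean_space \<Rightarrow> 'a"
  assumes Tm: "T \<in> borel_measurable borel" and D: "distr lborel borel T = lborel"
  shows "distr lebesgue lebesgue T = lebesgue" "T \<in> lebesgue \<rightarrow>\<^sub>M lebesgue"
proof -
  have Tm': "T \<in> lebesgue \<rightarrow>\<^sub>M lborel"
    using Tm by (simp add: measurable_completion)
  have D2: "distr lebesgue lborel T = lborel"
  proof -
    have "distr lebesgue lborel T = distr lborel lborel T"
      by (rule distr_completion) (use Tm in simp)
    also have "\<dots> = distr lborel borel T"
      by (rule distr_cong) auto
    finally show ?thesis using D by simp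
  qed
  have "completion (distr lebesgue lborel T) = distr lebesgue (completion lborel) T"
    by (rule completion.completion_distr_eq[OF Tm']) (simp add: D2)
  then show "distr lebesgue lebesgue T = lebesgue" by (simp add: D2)
  show "T \<in> lebesgue \<rightarrow>\<^sub>M lebesgue"
    by (rule completion.measurable_completion2[OF Tm']) (simp add: D2)
qed

lemma rot_exists:
  fixes x s :: "'a::euclidean_space"
  assumes "norm x = norm s"
  obtains T where "linear T" "\<And>y. norm (T y) = norm y" "T x = s"
    "distr lebesgue lebesgue T = lebesgue" "T \<in> lebesgue \<rightarrow>\<^sub>M lebesgue"
proof -
  obtain Q where Q: "orthogonal_transformation Q" "Q (Phi x) = Phi s"
    using orthogonal_transformation_exists[of "Phi x" "Phi s"] assms by (auto simp: norm_Phi)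
  define T where "T = Psi \<circ> Q \<circ> Phi"
  have lin: "linear T" unfolding T_def
    by (intro linear_compose linear_Phi linear_Psi orthogonal_transformation_linear Q)
  have Qm: "Q \<in> borel_measurable borel"
    by (intro borel_measurable_continuous_onI linear_continuous_on linear_conv_bounded_linear[THEN iffD1] orthogonal_transformation_linear Q)
  have Tm: "T \<in> borel_measurable borel" unfolding T_def using Qm by measurable
  have nT: "norm (T y) = norm y" for y
    by (metis T_def Phi_Psi comp_apply norm_Phi orthogonal_transformation_norm Q(1))
  have "T x = s" by (simp add: T_def Q)
  have "distr lborel borel T = distr (distr (distr (lborel::'a measure) borel Phi) borel Q) borel Psi"
    unfolding T_def using Qm by (simp add: distr_distr comp_assoc)
  also have "\<dots> = lborel" by (simp add: distr_Phi distr_orth[OF Q(1)] distr_Psi)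
  finally have D: "distr lborel borel T = lborel" .
  show ?thesis
    by (rule that[OF lin nT \<open>T x = s\<close> distr_lebesgue_from_lborel[OF Tm D]])
qed



lemma rot_integral:
  fixes g :: "'a::euclidean_space \<Rightarrow> ennreal" and G :: "real \<Rightarrow> ennreal"
  assumes gm: "g \<in> borel_measurable lebesgue" and rad: "\<And>y. g y = G (norm y)"
    and ns: "norm s = norm x"
  shows "(\<integral>\<^sup>+y. g y * indicator (ball s R) y \<partial>lebesgue) = (\<integral>\<^sup>+y. g y * indicator (ball x R) y \<partial>lebesgue)"
proof -
  obtain T where lin: "linear T" and nT: "\<And>y. norm (T y) = norm y" and Tx: "T x = s"
    and D: "distr lebesgue lebesgue T = lebesgue" and Tm: "T \<in> lebesgue \<rightarrow>\<^sub>M lebesgue"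
    using rot_exists[of x s] ns by metis
  have [measurable]: "ball s R \<in> sets lebesgue"
    using lmeasurable_ball by blast
  have hm: "(\<lambda>y. g y * indicator (ball s R) y) \<in> borel_measurable lebesgue"
    using gm by measurable
  have "(\<integral>\<^sup>+y. g y * indicator (ball s R) y \<partial>lebesgue)
      = (\<integral>\<^sup>+y. g y * indicator (ball s R) y \<partial>(distr lebesgue lebesgue T))"
    by (simp add: D)
  also have "\<dots> = (\<integral>\<^sup>+z. g (T z) * indicator (ball s R) (T z) \<partial>lebesgue)"
    by (rule nn_integral_distr[OF Tm]) (use hm in simp)
  also have "\<dots> = (\<integral>\<^sup>+z. g z * indicator (ball x R) z \<partial>lebesgue)"
  proof (rule nn_integral_cong)
    fix z
    have "dist s (T z) = dist x z"
      using nT[of "x - z"] by (simp add: dist_norm Tx[symmetric] linear_diff[OF lin])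
    then show "g (T z) * indicator (ball s R) (T z) = g z * indicator (ball x R) z"
      by (simp add: rad nT indicator_def)
  qed
  finally show ?thesis .
qed

lemma disjoint_copies:
  fixes g :: "'a::euclidean_space \<Rightarrow> ennreal" and x :: 'a and S :: "'a set" and G :: "real \<Rightarrow> ennreal"
  assumes gm: "g \<in> borel_measurable lebesgue" and rad: "\<And>y. g y = G (norm y)"
    and S: "finite S" "S \<subseteq> sphere 0 (norm x)"
    and sep: "\<And>a b. a \<in> S \<Longrightarrow> b \<in> S \<Longrightarrow> a \<noteq> b \<Longrightarrow> 2 * R \<le> dist a b"
  shows "of_nat (card S) * (\<integral>\<^sup>+y. g y * indicator (ball x R) y \<partial>lebesgue) \<le> (\<integral>\<^sup>+y. g y \<partial>lebesgue)"
proof -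
  have "of_nat (card S) * (\<integral>\<^sup>+y. g y * indicator (ball x R) y \<partial>lebesgue)
      = (\<Sum>s\<in>S. \<integral>\<^sup>+y. g y * indicator (ball s R) y \<partial>lebesgue)"
  proof -
    have "(\<Sum>s\<in>S. \<integral>\<^sup>+y. g y * indicator (ball s R) y \<partial>lebesgue)
        = (\<Sum>s\<in>S. \<integral>\<^sup>+y. g y * indicator (ball x R) y \<partial>lebesgue)"
      using S(2) by (intro sum.cong refl rot_integral[OF gm rad]) auto
    then show ?thesis by simp
  qed
  also have "\<dots> = (\<integral>\<^sup>+y. (\<Sum>s\<in>S. g y * indicator (ball s R) y) \<partial>lebesgue)"
  proof (rule nn_integral_sum[symmetric])
    fix s :: 'a
    have [measurable]: "ball s R \<in> sets lebesgue"
      using lmeasurable_ball by blast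
    show "(\<lambda>y. g y * indicator (ball s R) y) \<in> borel_measurable lebesgue"
      using gm by measurable
  qed
  also have "\<dots> \<le> (\<integral>\<^sup>+y. g y \<partial>lebesgue)"
  proof (rule nn_integral_mono)
    fix y
    have eq: "(\<Sum>s\<in>S. g y * indicator (ball s R) y) = g y * of_nat (card (S \<inter> ball y R))"
    proof -
      have "(\<Sum>s\<in>S. g y * indicator (ball s R) y) = g y * (\<Sum>s\<in>S. indicator (ball y R) s)"
        by (simp add: sum_distrib_left indicator_def dist_commute)
      also have "(\<Sum>s\<in>S. indicator (ball y R) s :: ennreal) = of_nat (card (S \<inter> ball y R))"
        by (subst sum_indicator_eq_card[OF S(1), symmetric]) (simp add: of_nat_sum indicator_def)
      finally show ?thesis .
    qed
    have "card (S \<inter> ball y R) \<le> Suc 0"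
    proof (subst card_le_Suc0_iff_eq)
      show "finite (S \<inter> ball y R)" using S(1) by simp
      show "\<forall>a1\<in>S \<inter> ball y R. \<forall>a2\<in>S \<inter> ball y R. a1 = a2"
      proof (intro ballI, rule ccontr)
        fix a b assume a: "a \<in> S \<inter> ball y R" and b: "b \<in> S \<inter> ball y R" and ne: "a \<noteq> b"
        have "dist a b \<le> dist y a + dist y b" by (metis dist_commute dist_triangle)
        also have "\<dots> < 2 * R" using a b by auto
        finally show False using sep[of a b] a b ne by auto
      qed
    qed
    then have "of_nat (card (S \<inter> ball y R)) \<le> (1::ennreal)"
      by (metis One_nat_def of_nat_1 of_nat_le_iff)
    then show "(\<Sum>s\<in>S. g y * indicator (ball s R) y) \<le> g y"
      unfolding eq by (metis mult.right_neutral mult_left_mono zero_le)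
  qed
  finally show ?thesis .
qed



lemma emeasure_lebesgue_ball_eq: "emeasure lebesgue (ball (c::'a::euclidean_space) r) = ennreal (measure lborel (ball c r))"
proof -
  have "emeasure lebesgue (ball c r) = emeasure lborel (ball c r)" by simp
  also have "\<dots> = ennreal (measure lborel (ball c r))"
    using emeasure_lborel_ball_finite[of c r] by (simp add: emeasure_eq_ennreal_measure)
  finally show ?thesis .
qed

lemma measure_lebesgue_ball_eq: "measure lebesgue (ball (c::'a::euclidean_space) r) = measure lborel (ball c r)"
  by simp

lemma card_sep_bound:
  fixes x :: "'a::euclidean_space" and S :: "'a set"
  assumes S: "finite S" "S \<subseteq> sphere 0 (norm x)"
    and sep: "\<And>a b. a \<in> S \<Longrightarrow> b \<in> S \<Longrightarrow> a \<noteq> b \<Longrightarrow> 2 * R \<le> dist a b"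
    and R: "R > 0"
  shows "real (card S) * R ^ DIM('a) \<le> (norm x + R) ^ DIM('a)"
proof -
  define \<rho> where "\<rho> = norm x + R"
  define \<omega> where "\<omega> = measure lborel (ball (0::'a) 1)"
  have om: "\<omega> > 0" unfolding \<omega>_def by (simp add: content_ball_pos)
  have bm[measurable]: "ball (0::'a) \<rho> \<in> sets lebesgue" using lmeasurable_ball by blast
  have gm: "indicator (ball (0::'a) \<rho>) \<in> borel_measurable lebesgue" by measurable
  have rad: "indicator (ball (0::'a) \<rho>) y = (indicator {..<\<rho>} (norm y) :: ennreal)" for y
    by (simp add: indicator_def)
  have sub: "ball x R \<subseteq> ball 0 \<rho>"
  proof
    fix y assume "y \<in> ball x R"
    then have "norm (y - x) < R" by (simp add: dist_norm norm_minus_commute)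
    moreover have "norm y \<le> norm x + norm (y - x)"
      using norm_triangle_ineq[of x "y - x"] by simp
    ultimately show "y \<in> ball 0 \<rho>" by (simp add: \<rho>_def)
  qed
  have b1: "measure lborel (ball x R) = R ^ DIM('a) * \<omega>"
    using content_ball_conv_unit_ball[of R x] R by (simp add: \<omega>_def)
  have b2: "measure lborel (ball (0::'a) \<rho>) = \<rho> ^ DIM('a) * \<omega>"
    using content_ball_conv_unit_ball[of \<rho> "0::'a"] R by (simp add: \<omega>_def \<rho>_def)
  have "of_nat (card S) * (\<integral>\<^sup>+y. indicator (ball 0 \<rho>) y * indicator (ball x R) y \<partial>lebesgue)
     \<le> (\<integral>\<^sup>+y. indicator (ball (0::'a) \<rho>) y \<partial>lebesgue)"
    by (rule disjoint_copies[OF gm rad S sep])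
  moreover have "(\<integral>\<^sup>+y. indicator (ball 0 \<rho>) y * indicator (ball x R) y \<partial>lebesgue) = ennreal (R ^ DIM('a) * \<omega>)"
  proof -
    have "(\<lambda>y. indicator (ball 0 \<rho>) y * indicator (ball x R) y :: ennreal) = indicator (ball x R)"
      using sub by (auto simp: indicator_def fun_eq_iff)
    then show ?thesis
      using R by (simp add: emeasure_lebesgue_ball_eq b1)
  qed
  moreover have "(\<integral>\<^sup>+y. indicator (ball (0::'a) \<rho>) y \<partial>lebesgue) = ennreal (\<rho> ^ DIM('a) * \<omega>)"
    by (simp add: emeasure_lebesgue_ball_eq b2)
  ultimately have "ennreal (real (card S) * (R ^ DIM('a) * \<omega>)) \<le> ennreal (\<rho> ^ DIM('a) * \<omega>)"
    using R om by (simp add: ennreal_mult' ennreal_of_nat_eq_real_of_nat)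
  then have "real (card S) * (R ^ DIM('a) * \<omega>) \<le> \<rho> ^ DIM('a) * \<omega>"
    using R om unfolding \<rho>_def by (subst (asm) ennreal_le_iff) auto
  then show ?thesis using om unfolding \<rho>_def by (simp add: mult.assoc[symmetric])
qed


lemma packing:
  fixes x :: "'a::euclidean_space"
  assumes R: "R > 0" and x: "x \<noteq> 0"
  obtains S :: "'a set" where "finite S" "S \<subseteq> sphere 0 (norm x)"
    "\<And>a b. a \<in> S \<Longrightarrow> b \<in> S \<Longrightarrow> a \<noteq> b \<Longrightarrow> 2 * R \<le> dist a b"
    "norm x ^ (DIM('a) - 1) \<le> 3 ^ DIM('a) * R ^ (DIM('a) - 1) * real (card S)"
proof -
  define r where "r = norm x"
  have r: "r > 0" using x by (simp add: r_def)
  define n where "n = DIM('a)"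
  define P where "P S \<longleftrightarrow> finite S \<and> S \<subseteq> sphere (0::'a) r \<and> (\<forall>a\<in>S. \<forall>b\<in>S. a \<noteq> b \<longrightarrow> 2 * R \<le> dist a b)" for S
  define B :: nat where "B = nat \<lceil>(r + R) ^ n / R ^ n\<rceil>"
  have bound: "card S \<le> B" if "P S" for S
  proof -
    have "real (card S) * R ^ n \<le> (r + R) ^ n"
      using card_sep_bound[of S x R] that R unfolding P_def r_def n_def by blast
    then have "real (card S) \<le> (r + R) ^ n / R ^ n"
      using R by (simp add: field_simps)
    also have "\<dots> \<le> real B" unfolding B_def by linarith
    finally show ?thesis by simp
  qed
  have fin: "finite (card ` {S. P S})"
    by (rule finite_subset[of _ "{..B}"]) (use bound in auto)
  have ne: "card ` {S. P S} \<noteq> {}"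
    using P_def[of "{}"] by auto
  obtain S where PS: "P S" and Smax: "card S = Max (card ` {S. P S})"
    using Max_in[OF fin ne] by auto
  have maxi: "card S' \<le> card S" if "P S'" for S'
    using Max_ge[OF fin] that Smax by auto
  have cover: "\<exists>s\<in>S. dist y s < 2 * R" if y: "y \<in> sphere 0 r" for y
  proof (rule ccontr)
    assume "\<not> ?thesis"
    then have far: "\<forall>s\<in>S. 2 * R \<le> dist y s" by auto
    have yS: "y \<notin> S" using far R by auto
    have "P (insert y S)"
      using PS far y unfolding P_def by (auto simp: dist_commute)
    then have "card (insert y S) \<le> card S" by (rule maxi)
    moreover have "card (insert y S) = Suc (card S)"
      using PS yS unfolding P_def by simp
    ultimately show False by simp
  qed
  have Sfin: "finite S" using PS P_def by simp
  define \<omega> where "\<omega> = measure lborel (ball (0::'a) 1)"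
  have om: "\<omega> > 0" unfolding \<omega>_def using content_ball_pos[of 1 "0::'a"] by simp
  define U where "U = (\<Union>s\<in>S. ball s (3 * R))"
  define A where "A = ball (0::'a) (r + R) - cball 0 r"
  have AU: "A \<subseteq> U"
  proof
    fix y assume "y \<in> A"
    then have y1: "norm y < r + R" and y2: "r < norm y" by (auto simp: A_def)
    have ny: "norm y > 0" using y2 r by linarith
    define y' where "y' = (r / norm y) *\<^sub>R y"
    have ny': "norm y' = r" using ny r by (simp add: y'_def)
    have "y - y' = (1 - r / norm y) *\<^sub>R y" by (simp add: y'_def algebra_simps)
    then have "norm (y - y') = \<bar>1 - r / norm y\<bar> * norm y" by simp
    also have "\<dots> = norm y - r" using ny y2 by (simp add: field_simps abs_if)
    finally have d1: "dist y y' < R" using y1 by (simp add: dist_norm)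
    obtain s where s: "s \<in> S" "dist y' s < 2 * R" using cover[of y'] ny' by auto
    have "dist y s \<le> dist y y' + dist y' s" by (rule dist_triangle)
    also have "\<dots> < 3 * R" using d1 s by simp
    finally show "y \<in> U" using s by (auto simp: U_def dist_commute)
  qed
  have Ulm: "U \<in> lmeasurable"
    unfolding U_def using Sfin by (intro lmeasurable_open bounded_UN open_UN) auto
  have Alm: "A \<in> sets lebesgue"
    unfolding A_def by (intro sets.Diff) (simp_all add: lmeasurable_ball[THEN fmeasurableD] lmeasurable_cball[THEN fmeasurableD])
  have mA: "measure lebesgue A = (r + R) ^ n * \<omega> - r ^ n * \<omega>"
  proof -
    have "measure lebesgue A = measure lebesgue (ball (0::'a) (r + R)) - measure lebesgue (cball (0::'a) r)"
      unfolding A_def using R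
      by (intro measure_Diff) (auto simp: emeasure_lebesgue_ball_eq lmeasurable_cball[THEN fmeasurableD])
    also have "\<dots> = measure lborel (ball (0::'a) (r + R)) - measure lborel (ball (0::'a) r)"
      using content_cball_conv_ball[of "0::'a" r] by simp
    also have "\<dots> = (r + R) ^ n * \<omega> - r ^ n * \<omega>"
      using content_ball_conv_unit_ball[of "r + R" "0::'a"] content_ball_conv_unit_ball[of r "0::'a"] r R
      by (simp add: \<omega>_def n_def)
    finally show ?thesis .
  qed
  have "measure lebesgue A \<le> measure lebesgue U"
    by (rule measure_mono_fmeasurable[OF AU Alm Ulm])
  also have "\<dots> \<le> (\<Sum>s\<in>S. measure lebesgue (ball s (3 * R)))"
    unfolding U_def using Sfin by (intro measure_UNION_le) (auto simp: lmeasurable_ball[THEN fmeasurableD])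
  also have "\<dots> = real (card S) * ((3 * R) ^ n * \<omega>)"
  proof -
    have "measure lebesgue (ball s (3 * R)) = (3 * R) ^ n * \<omega>" for s :: 'a
      using content_ball_conv_unit_ball[of "3 * R" s] R by (simp add: \<omega>_def n_def)
    then show ?thesis by simp
  qed
  finally have ineq: "(r + R) ^ n * \<omega> - r ^ n * \<omega> \<le> real (card S) * ((3 * R) ^ n * \<omega>)"
    using mA by simp
  have n1: "n \<ge> 1" unfolding n_def by (simp add: DIM_positive Suc_leI)
  then obtain k where k: "n = Suc k" using not0_implies_Suc by fastforce
  have "R * r ^ k \<le> (r + R) ^ n - r ^ n"
  proof -
    have "r ^ k \<le> (r + R) ^ k" using r R by (intro power_mono) auto
    then have "(r + R) * r ^ k \<le> (r + R) * (r + R) ^ k" using r R by (intro mult_left_mono) auto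
    then show ?thesis using k by (simp add: algebra_simps)
  qed
  then have "R * r ^ k * \<omega> \<le> real (card S) * ((3 * R) ^ n * \<omega>)"
    using ineq om by (smt (verit, ccfv_SIG) left_diff_distrib mult_right_mono)
  then have "R * r ^ k \<le> real (card S) * (3 * R) ^ n"
    using om by (simp add: mult.assoc[symmetric])
  then have "R * r ^ k \<le> R * (3 ^ n * R ^ k * real (card S))"
    using k by (simp add: power_mult_distrib algebra_simps)
  then have "r ^ k \<le> 3 ^ n * R ^ k * real (card S)"
    using R by simp
  then show ?thesis
    using that[of S] PS k unfolding P_def r_def n_def by auto
qed




lemma key_bound:
  fixes f :: "'a::euclidean_space \<Rightarrow> real" and x :: 'a
  assumes rad: "radially_symmetric f" and fm: "f \<in> borel_measurable lebesgue"
    and R: "R > 0" and x: "x \<noteq> 0"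
  shows "ennreal (norm x ^ (DIM('a) - 1)) * (\<integral>\<^sup>+y. ennreal (\<bar>f y\<bar> powr p) * indicator (ball x R) y \<partial>lebesgue)
    \<le> ennreal (3 ^ DIM('a) * R ^ (DIM('a) - 1)) * (\<integral>\<^sup>+y. ennreal (\<bar>f y\<bar> powr p) \<partial>lebesgue)"
proof -
  obtain f0 where f0: "\<And>y. f y = f0 (norm y)"
    using rad unfolding radially_symmetric_def by blast
  define g where "g y = ennreal (\<bar>f y\<bar> powr p)" for y
  have gm: "g \<in> borel_measurable lebesgue" unfolding g_def using fm by measurable
  have grad: "g y = (\<lambda>t. ennreal (\<bar>f0 t\<bar> powr p)) (norm y)" for y
    by (simp add: g_def f0)
  obtain S :: "'a set" where S: "finite S" "S \<subseteq> sphere 0 (norm x)"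
    and sep: "\<And>a b. a \<in> S \<Longrightarrow> b \<in> S \<Longrightarrow> a \<noteq> b \<Longrightarrow> 2 * R \<le> dist a b"
    and cS: "norm x ^ (DIM('a) - 1) \<le> 3 ^ DIM('a) * R ^ (DIM('a) - 1) * real (card S)"
    using packing[OF R x] by metis
  have dc: "of_nat (card S) * (\<integral>\<^sup>+y. g y * indicator (ball x R) y \<partial>lebesgue) \<le> (\<integral>\<^sup>+y. g y \<partial>lebesgue)"
    by (rule disjoint_copies[OF gm grad S sep])
  have "ennreal (norm x ^ (DIM('a) - 1)) * (\<integral>\<^sup>+y. g y * indicator (ball x R) y \<partial>lebesgue)
      \<le> ennreal (3 ^ DIM('a) * R ^ (DIM('a) - 1) * real (card S)) * (\<integral>\<^sup>+y. g y * indicator (ball x R) y \<partial>lebesgue)"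
    by (intro mult_right_mono ennreal_leI cS) simp
  also have "\<dots> = ennreal (3 ^ DIM('a) * R ^ (DIM('a) - 1)) * (of_nat (card S) * (\<integral>\<^sup>+y. g y * indicator (ball x R) y \<partial>lebesgue))"
    using R by (simp add: ennreal_mult' ennreal_of_nat_eq_real_of_nat mult.assoc)
  also have "\<dots> \<le> ennreal (3 ^ DIM('a) * R ^ (DIM('a) - 1)) * (\<integral>\<^sup>+y. g y \<partial>lebesgue)"
    by (intro mult_left_mono dc) simp
  finally show ?thesis unfolding g_def .
qed



lemma young_pointwise:
  fixes a P \<beta> B V p :: real
  assumes p: "p > 1" and a: "a \<ge> 0" and B: "B > 0" and V: "V > 0"
    and P: "P = B powr (1/p)" and \<beta>: "\<beta> = V powr (1 - 1/p)"
  shows "a \<le> (P * \<beta> / (p * B)) * a powr p + P * \<beta> / ((p / (p - 1)) * V)"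
proof -
  define q where "q = p / (p - 1)"
  have q: "q > 1" "1/p + 1/q = 1" using p by (auto simp: q_def field_simps)
  have Pp: "P > 0" "\<beta> > 0" using B V by (auto simp: P \<beta>)
  have "(a / P) * (1 / \<beta>) \<le> (a / P) powr p / p + (1 / \<beta>) powr q / q"
    using Youngs_inequality[OF p q(1) q(2), of "a / P" "1 / \<beta>"] a Pp by simp
  also have "(a / P) powr p = a powr p / B"
    using a B p by (simp add: P powr_divide powr_powr)
  also have "(1 / \<beta>) powr q = 1 / V"
  proof -
    have "(1 - 1/p) * q = 1" using p by (simp add: q_def field_simps)
    then show ?thesis using V by (simp add: \<beta> powr_divide powr_powr)
  qed
  finally have "a / (P * \<beta>) \<le> a powr p / B / p + 1 / V / q" by simp
  then have "a \<le> (P * \<beta>) * (a powr p / B / p + 1 / V / q)"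
    using Pp by (simp add: divide_le_eq mult.commute)
  then show ?thesis using Pp B V p by (simp add: q_def[symmetric] field_simps)
qed


lemma main_bound:
  fixes f :: "'a::euclidean_space \<Rightarrow> real" and x :: 'a and p R :: real
  assumes p: "1 < p" and rad: "radially_symmetric f" and Lp: "in_Lp p f" and R: "R > 0" and x: "x \<noteq> 0"
  shows "\<bar>conv f (indicator (ball 0 R)) x\<bar>
     \<le> ((3 ^ DIM('a)) powr (1/p) * (measure lborel (ball (0::'a) 1)) powr (1 - 1/p))
        * R powr (real DIM('a) - 1 / p) * norm x powr (- (real DIM('a) - 1) / p) * Lp_norm p f"
proof -
  define n where "n = DIM('a)"
  define \<omega> where "\<omega> = measure lborel (ball (0::'a) 1)"
  have om: "\<omega> > 0" unfolding \<omega>_def using content_ball_pos[of 1 "0::'a"] by simp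
  define r where "r = norm x"
  have r: "r > 0" using x by (simp add: r_def)
  have n1: "n \<ge> 1" unfolding n_def by (simp add: DIM_positive Suc_leI)
  have fm[measurable]: "f \<in> borel_measurable lebesgue" and fi: "integrable lebesgue (\<lambda>x. \<bar>f x\<bar> powr p)"
    using Lp by (auto simp: in_Lp_def)
  define Np where "Np = (LINT y|lebesgue. \<bar>f y\<bar> powr p)"
  have Np0: "Np \<ge> 0" unfolding Np_def by simp
  have Ienn: "(\<integral>\<^sup>+y. ennreal (\<bar>f y\<bar> powr p) \<partial>lebesgue) = ennreal Np"
    unfolding Np_def by (rule nn_integral_eq_integral[OF fi]) simp
  have Lpn: "Lp_norm p f = Np powr (1/p)" by (simp add: Lp_norm_def Np_def)
  have bm[measurable]: "ball x R \<in> sets lebesgue" using lmeasurable_ball by blast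
  define h where "h y = \<bar>f y\<bar> * indicator (ball x R) y" for y
  have hm: "h \<in> borel_measurable lebesgue" unfolding h_def by measurable
  have conv_le: "\<bar>conv f (indicator (ball 0 R)) x\<bar> \<le> enn2real (\<integral>\<^sup>+y. ennreal (h y) \<partial>lebesgue)"
  proof -
    have eq: "f y * indicator (ball 0 R) (x - y) = f y * indicator (ball x R) y" for y
      by (simp add: indicator_def dist_norm norm_minus_commute)
    have "\<bar>conv f (indicator (ball 0 R)) x\<bar> = norm (LINT y|lebesgue. f y * indicator (ball x R) y)"
      unfolding conv_def by (simp add: eq)
    also have "\<dots> \<le> (LINT y|lebesgue. norm (f y * indicator (ball x R) y))"
      by (rule integral_norm_bound)
    also have "\<dots> = (LINT y|lebesgue. h y)"
      by (simp add: h_def abs_mult)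
    also have "\<dots> = enn2real (\<integral>\<^sup>+y. ennreal (h y) \<partial>lebesgue)"
      by (rule integral_eq_nn_integral[OF hm]) (simp add: h_def)
    finally show ?thesis .
  qed
  define RHS where "RHS = ((3 ^ n) powr (1/p) * \<omega> powr (1 - 1/p))
        * R powr (real n - 1 / p) * r powr (- (real n - 1) / p) * Np powr (1/p)"
  have RHS0: "RHS \<ge> 0" unfolding RHS_def by simp
  show ?thesis
  proof (cases "Np = 0")
    case True
    have "AE y in lebesgue. \<bar>f y\<bar> powr p = 0"
      using integral_nonneg_eq_0_iff_AE[OF fi] True by (simp add: Np_def)
    then have "AE y in lebesgue. ennreal (h y) = 0"
      by eventually_elim (simp add: h_def)
    moreover have "(\<lambda>y. ennreal (h y)) \<in> borel_measurable lebesgue" using hm by measurable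
    ultimately have "(\<integral>\<^sup>+y. ennreal (h y) \<partial>lebesgue) = 0"
      by (subst nn_integral_0_iff_AE) auto
    then have "\<bar>conv f (indicator (ball 0 R)) x\<bar> \<le> 0" using conv_le by simp
    then show ?thesis using True by (simp add: Lpn)
  next
    case False
    then have Npos: "Np > 0" using Np0 by simp
    define J where "J = (\<integral>\<^sup>+y. ennreal (\<bar>f y\<bar> powr p) * indicator (ball x R) y \<partial>lebesgue)"
    define Bv where "Bv = 3 ^ n * R ^ (n - 1) * Np / r ^ (n - 1)"
    have Bv: "Bv > 0" unfolding Bv_def using R r Npos by simp
    have JB: "J \<le> ennreal Bv"
    proof -
      have kb: "ennreal (r ^ (n - 1)) * J \<le> ennreal (3 ^ n * R ^ (n - 1) * Np)"
        using key_bound[OF rad fm R x, of p] Ienn R Np0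
        by (simp add: J_def r_def n_def ennreal_mult'[symmetric])
      have "J = ennreal (1 / r ^ (n - 1)) * (ennreal (r ^ (n - 1)) * J)"
        using r by (simp add: mult.assoc[symmetric] ennreal_mult'[symmetric])
      also have "\<dots> \<le> ennreal (1 / r ^ (n - 1)) * ennreal (3 ^ n * R ^ (n - 1) * Np)"
        by (intro mult_left_mono kb) simp
      also have "\<dots> = ennreal Bv"
        using r by (simp add: Bv_def ennreal_mult'[symmetric])
      finally show ?thesis .
    qed
    define V where "V = R ^ n * \<omega>"
    have V: "V > 0" using R om by (simp add: V_def)
    have Venn: "(\<integral>\<^sup>+y. indicator (ball x R) y \<partial>lebesgue) = ennreal V"
      using content_ball_conv_unit_ball[of R x] R by (simp add: emeasure_lebesgue_ball_eq V_def \<omega>_def n_def)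
    define P where "P = Bv powr (1/p)"
    define \<beta> where "\<beta> = V powr (1 - 1/p)"
    define c1 where "c1 = P * \<beta> / (p * Bv)"
    define c2 where "c2 = P * \<beta> / ((p / (p - 1)) * V)"
    have c: "c1 \<ge> 0" "c2 \<ge> 0" using Bv V p by (auto simp: c1_def c2_def P_def \<beta>_def)
    have pw: "ennreal (h y) \<le> ennreal c1 * (ennreal (\<bar>f y\<bar> powr p) * indicator (ball x R) y) + ennreal c2 * indicator (ball x R) y" for y
    proof (cases "y \<in> ball x R")
      case True
      have "\<bar>f y\<bar> \<le> c1 * \<bar>f y\<bar> powr p + c2"
        unfolding c1_def c2_def by (rule young_pointwise[OF p _ Bv V P_def \<beta>_def]) simp
      then show ?thesis using True c
        by (simp add: h_def ennreal_mult'[symmetric] ennreal_plus[symmetric] del: ennreal_plus)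
    qed (simp add: h_def)
    have "(\<integral>\<^sup>+y. ennreal (h y) \<partial>lebesgue)
        \<le> (\<integral>\<^sup>+y. ennreal c1 * (ennreal (\<bar>f y\<bar> powr p) * indicator (ball x R) y) + ennreal c2 * indicator (ball x R) y \<partial>lebesgue)"
      by (intro nn_integral_mono pw)
    also have "\<dots> = ennreal c1 * J + ennreal c2 * ennreal V"
      by (simp add: nn_integral_add nn_integral_cmult J_def Venn[symmetric])
    also have "\<dots> \<le> ennreal c1 * ennreal Bv + ennreal c2 * ennreal V"
      by (intro add_mono mult_left_mono JB) auto
    also have "\<dots> = ennreal (c1 * Bv + c2 * V)"
      using c Bv V by (simp add: ennreal_mult'[symmetric] ennreal_plus[symmetric] del: ennreal_plus)
    also have "c1 * Bv + c2 * V = P * \<beta>"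
      using Bv V p by (simp add: c1_def c2_def field_simps)
    finally have "enn2real (\<integral>\<^sup>+y. ennreal (h y) \<partial>lebesgue) \<le> P * \<beta>"
      using Bv V by (intro enn2real_leI) (auto simp: P_def \<beta>_def)
    with conv_le have main: "\<bar>conv f (indicator (ball 0 R)) x\<bar> \<le> P * \<beta>" by linarith
    define a where "a = real n"
    have e1: "R ^ (n - 1) = R powr (a - 1)" "r ^ (n - 1) = r powr (a - 1)"
      using R r n1 by (simp_all add: powr_realpow[symmetric] of_nat_diff a_def)
    have e2: "R ^ n = R powr a" "(3::real) ^ n = 3 powr a"
      using R by (simp_all add: powr_realpow[symmetric] a_def)
    have "P = 3 powr (a / p) * R powr ((a - 1) / p) * Np powr (1/p) / r powr ((a - 1) / p)"
      unfolding P_def Bv_def e1 e2 using R r Np0 p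
      by (simp add: powr_mult powr_divide powr_powr)
    moreover have "\<beta> = R powr (a * (1 - 1/p)) * \<omega> powr (1 - 1/p)"
      unfolding \<beta>_def V_def e2 using R om by (simp add: powr_mult powr_powr)
    moreover have "RHS = 3 powr (a / p) * \<omega> powr (1 - 1/p) * R powr (a - 1/p) * Np powr (1/p) / r powr ((a - 1) / p)"
    proof -
      have "(3 ^ n) powr (1/p) = (3::real) powr (a / p)" unfolding e2 by (simp add: powr_powr)
      moreover have "r powr (- (real n - 1) / p) = 1 / r powr ((a - 1) / p)"
        using r by (simp add: a_def powr_minus_divide[symmetric] minus_divide_left)
      ultimately show ?thesis unfolding RHS_def by (simp add: a_def)
    qed
    moreover have "R powr ((a - 1) / p) * R powr (a * (1 - 1/p)) = R powr (a - 1/p)"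
    proof -
      have "(a - 1) / p + a * (1 - 1/p) = a - 1/p" using p by (simp add: field_simps)
      then show ?thesis by (simp add: powr_add[symmetric])
    qed
    ultimately have "P * \<beta> = RHS"
      by (simp add: field_simps)
    then show ?thesis using main by (simp add: RHS_def Lpn \<omega>_def n_def r_def)
  qed
qed


theorem mainTheorem2:
  fixes p :: real
  assumes "1 < p"
  shows "\<exists>C::real. \<forall>(f::'a::euclidean_space \<Rightarrow> real) R x.
           radially_symmetric f \<and> in_Lp p f \<and> R > 0 \<and> x \<noteq> 0 \<longrightarrow>
           \<bar>conv f (indicator (ball 0 R)) x\<bar>
             \<le> C * R powr (real DIM('a) - 1 / p) * norm x powr (- (real DIM('a) - 1) / p)
                 * Lp_norm p f"
  using main_bound[OF assms] by blast


end
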